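(* For any two graphs $G_1$ and $G_2$, $\chi_L(G_1+G_2)=\chi_{L_2}(G_1)+\chi_{L_2}(G_2)$.
   Context: All graphs are finite and simple (not necessarily connected for $G_1,G_2$). A proper $k$-coloring of $G$ is a map $f$ from $V(G)$ onto $[k]=\{1,\dots,k\}$ with adjacent vertices receiving different colors; for $S\subseteq V(G)$, $f(S)=\{f(u):u\in S\}$, and $N_G(u)$ is the set of neighbors of $u$. A proper $k$-coloring $f$ is a neighbor locating coloring if for any two distinct vertices $u,v$ with $f(u)=f(v)$ we have $f(N_G(u))\ne f(N_G(v))$; the neighbor locating chromatic number $\chi_{L_2}(G)$ is the minimum number of colors in a neighbor locating coloring of $G$. For a connected graph $G$ with proper $k$-coloring $f$ and color classes $V_i=f^{-1}(i)$, the color code of $v$ is $(d(v,V_1),\dots,d(v,V_k))$, where $d(v,S)=\min_{x\in S}d(v,x)$; $f$ is a locating coloring if distinct vertices have distinct color codes, and $\chi_L(G)$ is the minimum number of colors in a locating coloring. The join $G_1+G_2$ is the disjoint union of $G_1$ and $G_2$ together with all edges joining a vertex of $G_1$ to a vertex of $G_2$. *)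

theory Defs
  imports Main
begin

definition simple_graph :: "'a set \<Rightarrow> ('a \<Rightarrow> 'a \<Rightarrow> bool) \<Rightarrow> bool" where
  "simple_graph V E \<longleftrightarrow> finite V \<and> V \<noteq> {} \<and>
     (\<forall>u v. E u v \<longrightarrow> u \<in> V \<and> v \<in> V) \<and>
     (\<forall>u v. E u v \<longrightarrow> E v u) \<and> (\<forall>u. \<not> E u u)"

definition nbhd :: "'a set \<Rightarrow> ('a \<Rightarrow> 'a \<Rightarrow> bool) \<Rightarrow> 'a \<Rightarrow> 'a set" where
  "nbhd V E u = {w \<in> V. E u w}"

definition proper_coloring :: "'a set \<Rightarrow> ('a \<Rightarrow> 'a \<Rightarrow> bool) \<Rightarrow> nat \<Rightarrow> ('a \<Rightarrow> nat) \<Rightarrow> bool" where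
  "proper_coloring V E k f \<longleftrightarrow> f ` V = {1..k} \<and>
     (\<forall>u\<in>V. \<forall>v\<in>V. E u v \<longrightarrow> f u \<noteq> f v)"

definition neighbor_locating_coloring ::
  "'a set \<Rightarrow> ('a \<Rightarrow> 'a \<Rightarrow> bool) \<Rightarrow> nat \<Rightarrow> ('a \<Rightarrow> nat) \<Rightarrow> bool" where
  "neighbor_locating_coloring V E k f \<longleftrightarrow> proper_coloring V E k f \<and>
     (\<forall>u\<in>V. \<forall>v\<in>V. u \<noteq> v \<and> f u = f v \<longrightarrow> f ` nbhd V E u \<noteq> f ` nbhd V E v)"

definition chi_L2 :: "'a set \<Rightarrow> ('a \<Rightarrow> 'a \<Rightarrow> bool) \<Rightarrow> nat" where
  "chi_L2 V E = (LEAST k. \<exists>f. neighbor_locating_coloring V E k f)"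

definition edge_rel :: "'a set \<Rightarrow> ('a \<Rightarrow> 'a \<Rightarrow> bool) \<Rightarrow> ('a \<times> 'a) set" where
  "edge_rel V E = {(u, v). u \<in> V \<and> v \<in> V \<and> E u v}"

definition connected_graph :: "'a set \<Rightarrow> ('a \<Rightarrow> 'a \<Rightarrow> bool) \<Rightarrow> bool" where
  "connected_graph V E \<longleftrightarrow> (\<forall>u\<in>V. \<forall>v\<in>V. \<exists>n. (u, v) \<in> edge_rel V E ^^ n)"

definition graph_dist :: "'a set \<Rightarrow> ('a \<Rightarrow> 'a \<Rightarrow> bool) \<Rightarrow> 'a \<Rightarrow> 'a \<Rightarrow> nat" where
  "graph_dist V E u v = (LEAST n. (u, v) \<in> edge_rel V E ^^ n)"

definition set_dist :: "'a set \<Rightarrow> ('a \<Rightarrow> 'a \<Rightarrow> bool) \<Rightarrow> 'a \<Rightarrow> 'a set \<Rightarrow> nat" where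
  "set_dist V E v S = Min (graph_dist V E v ` S)"

definition color_code :: "'a set \<Rightarrow> ('a \<Rightarrow> 'a \<Rightarrow> bool) \<Rightarrow> nat \<Rightarrow> ('a \<Rightarrow> nat) \<Rightarrow> 'a \<Rightarrow> nat list" where
  "color_code V E k f v = map (\<lambda>i. set_dist V E v {x \<in> V. f x = i}) [1..<k+1]"

definition locating_coloring :: "'a set \<Rightarrow> ('a \<Rightarrow> 'a \<Rightarrow> bool) \<Rightarrow> nat \<Rightarrow> ('a \<Rightarrow> nat) \<Rightarrow> bool" where
  "locating_coloring V E k f \<longleftrightarrow> proper_coloring V E k f \<and>
     (\<forall>u\<in>V. \<forall>v\<in>V. u \<noteq> v \<longrightarrow> color_code V E k f u \<noteq> color_code V E k f v)"

text \<open>Only meaningful for connected graphs.\<close>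
definition chi_L :: "'a set \<Rightarrow> ('a \<Rightarrow> 'a \<Rightarrow> bool) \<Rightarrow> nat" where
  "chi_L V E = (LEAST k. \<exists>f. locating_coloring V E k f)"

definition join_vertices :: "'a set \<Rightarrow> 'b set \<Rightarrow> ('a + 'b) set" where
  "join_vertices V1 V2 = Inl ` V1 \<union> Inr ` V2"

fun join_edges :: "'a set \<Rightarrow> ('a \<Rightarrow> 'a \<Rightarrow> bool) \<Rightarrow> 'b set \<Rightarrow> ('b \<Rightarrow> 'b \<Rightarrow> bool)
    \<Rightarrow> ('a + 'b) \<Rightarrow> ('a + 'b) \<Rightarrow> bool" where
  "join_edges V1 E1 V2 E2 (Inl a) (Inl b) = E1 a b"
| "join_edges V1 E1 V2 E2 (Inr a) (Inr b) = E2 a b"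
| "join_edges V1 E1 V2 E2 (Inl a) (Inr b) = (a \<in> V1 \<and> b \<in> V2)"
| "join_edges V1 E1 V2 E2 (Inr a) (Inl b) = (a \<in> V2 \<and> b \<in> V1)"

end

theory Submission
  imports Defs
begin

definition diam2 :: "'a set \<Rightarrow> ('a \<Rightarrow> 'a \<Rightarrow> bool) \<Rightarrow> bool" where
  "diam2 V E \<longleftrightarrow> finite V \<and> (\<forall>u. \<not> E u u) \<and>
     (\<forall>x\<in>V. \<forall>y\<in>V. x \<noteq> y \<and> \<not> E x y \<longrightarrow> (\<exists>z\<in>V. E x z \<and> E z y))"

lemma dist_diam2:
  assumes d: "diam2 V E" and x: "x \<in> V" and y: "y \<in> V"
  shows "graph_dist V E x y = (if x = y then 0 else if E x y then 1 else 2)"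
proof -
  have irr: "\<And>u. \<not> E u u" using d by (simp add: diam2_def)
  show ?thesis
  proof (cases "x = y")
    case True
    then show ?thesis unfolding graph_dist_def by (auto intro: Least_equality relpow_0_I)
  next
    case ne: False
    show ?thesis
    proof (cases "E x y")
      case True
      have "(LEAST n. (x, y) \<in> edge_rel V E ^^ n) = 1"
      proof (rule Least_equality)
        show "(x, y) \<in> edge_rel V E ^^ 1" using True x y by (simp add: edge_rel_def)
        fix n assume "(x, y) \<in> edge_rel V E ^^ n"
        then show "1 \<le> n" using ne by (cases n) auto
      qed
      then show ?thesis using ne True by (simp add: graph_dist_def)
    next
      case False
      obtain z where z: "z \<in> V" "E x z" "E z y" using d x y ne False unfolding diam2_def by blast
      have "(LEAST n. (x, y) \<in> edge_rel V E ^^ n) = 2"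
      proof (rule Least_equality)
        have "(x, z) \<in> edge_rel V E" "(z, y) \<in> edge_rel V E" using z x y by (auto simp: edge_rel_def)
        then show "(x, y) \<in> edge_rel V E ^^ 2" using relpow_Suc_I[where R="edge_rel V E" and n=1 and x=x and y=z and z=y] by (simp add: numeral_2_eq_2)
        fix n assume h: "(x, y) \<in> edge_rel V E ^^ n"
        show "2 \<le> n"
        proof (rule ccontr)
          assume "\<not> 2 \<le> n"
          then have "n = 0 \<or> n = 1" by auto
          then show False using h ne False by (auto simp: edge_rel_def)
        qed
      qed
      then show ?thesis using ne False by (simp add: graph_dist_def)
    qed
  qed
qed

lemma setdist_diam2:
  assumes d: "diam2 V E" and v: "v \<in> V" and S: "S \<subseteq> V" "S \<noteq> {}"
  shows "set_dist V E v S = (if v \<in> S then 0 else if \<exists>w\<in>S. E v w then 1 else 2)"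
proof -
  have fin: "finite S" using d S finite_subset by (auto simp: diam2_def)
  have img: "graph_dist V E v ` S = (\<lambda>w. if v = w then 0 else if E v w then 1 else 2) ` S"
    by (rule image_cong[OF refl]) (use dist_diam2[OF d v] S in blast)
  show ?thesis unfolding set_dist_def img
    by (rule Min_eqI) (use fin S in \<open>auto split: if_splits\<close>)
qed

lemma code_diam2:
  assumes d: "diam2 V E" and pc: "proper_coloring V E k f" and u: "u \<in> V" and v: "v \<in> V"
  shows "color_code V E k f u = color_code V E k f v \<longleftrightarrow>
         f u = f v \<and> f ` nbhd V E u = f ` nbhd V E v"
proof -
  define D where "D w i = (if f w = i then 0 else if i \<in> f ` nbhd V E w then 1 else (2::nat))" for w i
  have onto: "f ` V = {1..k}" and prp: "\<forall>a\<in>V. \<forall>b\<in>V. E a b \<longrightarrow> f a \<noteq> f b"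
    using pc by (auto simp: proper_coloring_def)
  have sd: "set_dist V E w {x \<in> V. f x = i} = D w i" if w: "w \<in> V" and i: "i \<in> {1..k}" for w i
  proof -
    have ne: "{x \<in> V. f x = i} \<noteq> {}" using i onto by (metis (mono_tags, lifting) empty_Collect_eq imageE)
    have "(\<exists>x\<in>{x \<in> V. f x = i}. E w x) \<longleftrightarrow> i \<in> f ` nbhd V E w"
      by (auto simp: nbhd_def)
    then show ?thesis using setdist_diam2[OF d w _ ne] w unfolding D_def by auto
  qed
  have cc: "color_code V E k f w = map (D w) [1..<k+1]" if "w \<in> V" for w
    unfolding color_code_def using sd[OF that] by (auto intro!: map_cong)
  have "color_code V E k f u = color_code V E k f v \<longleftrightarrow> (\<forall>i\<in>{1..k}. D u i = D v i)"
    unfolding cc[OF u] cc[OF v] map_eq_conv by auto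
  also have "\<dots> \<longleftrightarrow> f u = f v \<and> f ` nbhd V E u = f ` nbhd V E v"
  proof
    assume h: "\<forall>i\<in>{1..k}. D u i = D v i"
    have fu: "f u \<in> {1..k}" using u onto by auto
    then have "D v (f u) = D u (f u)" using h by metis
    then have "D v (f u) = 0" by (simp add: D_def)
    then have e: "f u = f v" by (auto simp: D_def split: if_splits)
    have sub: "f ` nbhd V E a \<subseteq> f ` nbhd V E b" if ab: "a \<in> V" "b \<in> V" "f a = f b"
      "\<forall>i\<in>{1..k}. D a i = D b i" for a b
    proof
      fix c assume c: "c \<in> f ` nbhd V E a"
      then obtain w where w: "w \<in> V" "E a w" "c = f w" by (auto simp: nbhd_def)
      have "c \<in> {1..k}" using w onto by auto
      moreover have "c \<noteq> f a" using w prp ab by metis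
      ultimately have ck: "c \<in> {1..k}" "c \<noteq> f a" .
      have "D a c = 1" using ck(2) c by (simp add: D_def)
      moreover have "D b c = D a c" using ab(4) ck(1) by metis
      ultimately have "D b c = 1" by simp
      then show "c \<in> f ` nbhd V E b" by (auto simp: D_def split: if_splits)
    qed
    show "f u = f v \<and> f ` nbhd V E u = f ` nbhd V E v"
      using e sub[OF u v e h] sub[OF v u e[symmetric]] h by auto
  qed (auto simp: D_def)
  finally show ?thesis .
qed

lemma loc_iff_nlc:
  assumes d: "diam2 V E"
  shows "locating_coloring V E k f \<longleftrightarrow> neighbor_locating_coloring V E k f"
  unfolding locating_coloring_def neighbor_locating_coloring_def
  using code_diam2[OF d] by blast

lemma join_diam2:
  assumes g1: "simple_graph V1 E1" and g2: "simple_graph V2 E2"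
  shows "diam2 (join_vertices V1 V2) (join_edges V1 E1 V2 E2)"
proof -
  have f: "finite (join_vertices V1 V2)" using g1 g2 by (simp add: join_vertices_def simple_graph_def)
  have irr: "\<forall>u. \<not> join_edges V1 E1 V2 E2 u u"
  proof
    fix u show "\<not> join_edges V1 E1 V2 E2 u u" using g1 g2 by (cases u) (auto simp: simple_graph_def)
  qed
  obtain w1 where w1: "w1 \<in> V1" using g1 by (auto simp: simple_graph_def)
  obtain w2 where w2: "w2 \<in> V2" using g2 by (auto simp: simple_graph_def)
  have "\<exists>z\<in>join_vertices V1 V2. join_edges V1 E1 V2 E2 x z \<and> join_edges V1 E1 V2 E2 z y"
    if "x \<in> join_vertices V1 V2" "y \<in> join_vertices V1 V2" "x \<noteq> y" "\<not> join_edges V1 E1 V2 E2 x y" for x y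
  proof (cases x)
    case (Inl a)
    then show ?thesis
    proof (cases y)
      case (Inl b) then show ?thesis using \<open>x = Inl a\<close> that w2
        by (intro bexI[of _ "Inr w2"]) (auto simp: join_vertices_def)
    next
      case (Inr b) then show ?thesis using \<open>x = Inl a\<close> that by (auto simp: join_vertices_def)
    qed
  next
    case (Inr a)
    then show ?thesis
    proof (cases y)
      case (Inr b) then show ?thesis using \<open>x = Inr a\<close> that w1
        by (intro bexI[of _ "Inl w1"]) (auto simp: join_vertices_def)
    next
      case (Inl b) then show ?thesis using \<open>x = Inr a\<close> that by (auto simp: join_vertices_def)
    qed
  qed
  then show ?thesis using f irr by (auto simp: diam2_def)
qed

lemma nbhd_Inl:
  assumes g1: "simple_graph V1 E1" and x: "x \<in> V1"
  shows "nbhd (join_vertices V1 V2) (join_edges V1 E1 V2 E2) (Inl x) = Inl ` nbhd V1 E1 x \<union> Inr ` V2"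
proof -
  have "\<And>w. E1 x w \<Longrightarrow> w \<in> V1" using g1 by (auto simp: simple_graph_def)
  then show ?thesis using x
    by (auto simp: nbhd_def join_vertices_def)
qed

lemma nbhd_Inr:
  assumes g2: "simple_graph V2 E2" and y: "y \<in> V2"
  shows "nbhd (join_vertices V1 V2) (join_edges V1 E1 V2 E2) (Inr y) = Inl ` V1 \<union> Inr ` nbhd V2 E2 y"
proof -
  have "\<And>w. E2 y w \<Longrightarrow> w \<in> V2" using g2 by (auto simp: simple_graph_def)
  then show ?thesis using y
    by (auto simp: nbhd_def join_vertices_def)
qed

lemma nlc_exists:
  assumes g: "simple_graph V E"
  shows "\<exists>k f. neighbor_locating_coloring V E k f"
proof -
  have fin: "finite V" using g by (simp add: simple_graph_def)
  obtain h where h: "bij_betw h V {1..card V}"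
    using finite_same_card_bij[OF fin, of "{1..card V}"] by auto
  have "neighbor_locating_coloring V E (card V) h"
    using h g unfolding neighbor_locating_coloring_def proper_coloring_def simple_graph_def bij_betw_def inj_on_def
    by metis
  then show ?thesis by blast
qed

lemma restrict_left:
  assumes g1: "simple_graph V1 E1" and g2: "simple_graph V2 E2"
    and n: "neighbor_locating_coloring (join_vertices V1 V2) (join_edges V1 E1 V2 E2) k f"
  shows "chi_L2 V1 E1 \<le> card (f ` Inl ` V1)"
proof -
  let ?S = "f ` Inl ` V1"
  have fin: "finite ?S" using g1 by (simp add: simple_graph_def)
  obtain h where h: "bij_betw h ?S {1..card ?S}"
    using finite_same_card_bij[OF fin, of "{1..card ?S}"] by auto
  have inj: "inj_on h ?S" and onto: "h ` ?S = {1..card ?S}" using h by (auto simp: bij_betw_def)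
  define g where "g x = h (f (Inl x))" for x
  have pc: "\<forall>u\<in>join_vertices V1 V2. \<forall>v\<in>join_vertices V1 V2. join_edges V1 E1 V2 E2 u v \<longrightarrow> f u \<noteq> f v"
   and nl: "\<forall>u\<in>join_vertices V1 V2. \<forall>v\<in>join_vertices V1 V2. u \<noteq> v \<and> f u = f v \<longrightarrow>
      f ` nbhd (join_vertices V1 V2) (join_edges V1 E1 V2 E2) u \<noteq> f ` nbhd (join_vertices V1 V2) (join_edges V1 E1 V2 E2) v"
    using n by (auto simp: neighbor_locating_coloring_def proper_coloring_def)
  have e1: "E1 u v \<Longrightarrow> u \<in> V1 \<and> v \<in> V1" for u v using g1 by (simp add: simple_graph_def)
  have "g ` V1 = {1..card ?S}" unfolding g_def using onto by (simp add: image_image)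
  moreover have "\<forall>u\<in>V1. \<forall>v\<in>V1. E1 u v \<longrightarrow> g u \<noteq> g v"
  proof (intro ballI impI)
    fix u v assume uv: "u \<in> V1" "v \<in> V1" "E1 u v"
    then have "f (Inl u) \<noteq> f (Inl v)" using pc by (auto simp: join_vertices_def)
    then show "g u \<noteq> g v" unfolding g_def using inj uv inj_on_def by (metis image_eqI)
  qed
  moreover have "\<forall>u\<in>V1. \<forall>v\<in>V1. u \<noteq> v \<and> g u = g v \<longrightarrow> g ` nbhd V1 E1 u \<noteq> g ` nbhd V1 E1 v"
  proof (intro ballI impI)
    fix u v assume uv: "u \<in> V1" "v \<in> V1" "u \<noteq> v \<and> g u = g v"
    then have "f (Inl u) = f (Inl v)" unfolding g_def using inj by (meson image_eqI inj_onD)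
    have pre: "f ` (Inl ` nbhd V1 E1 u \<union> Inr ` V2) \<noteq> f ` (Inl ` nbhd V1 E1 v \<union> Inr ` V2)"
    proof -
      have mem: "Inl u \<in> join_vertices V1 V2" "Inl v \<in> join_vertices V1 V2" using uv by (auto simp: join_vertices_def)
      have "Inl u \<noteq> Inl v" using uv by simp
      have "f ` nbhd (join_vertices V1 V2) (join_edges V1 E1 V2 E2) (Inl u) \<noteq> f ` nbhd (join_vertices V1 V2) (join_edges V1 E1 V2 E2) (Inl v)"
        by (rule nl[rule_format, OF mem(1) mem(2) conjI[OF \<open>Inl u \<noteq> Inl v\<close> \<open>f (Inl u) = f (Inl v)\<close>]])
      then show ?thesis using nbhd_Inl[OF g1, of u V2 E2] nbhd_Inl[OF g1, of v V2 E2] uv by simp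
    qed
    have ne: "f ` Inl ` nbhd V1 E1 u \<noteq> f ` Inl ` nbhd V1 E1 v"
    proof
      assume eq: "f ` Inl ` nbhd V1 E1 u = f ` Inl ` nbhd V1 E1 v"
      have "f ` (Inl ` nbhd V1 E1 u \<union> Inr ` V2) = f ` (Inl ` nbhd V1 E1 v \<union> Inr ` V2)" by (simp only: image_Un eq)
      with pre show False by contradiction
    qed
    have sub: "f ` Inl ` nbhd V1 E1 w \<subseteq> ?S" for w by (auto simp: nbhd_def)
    have "h ` f ` Inl ` nbhd V1 E1 u \<noteq> h ` f ` Inl ` nbhd V1 E1 v"
      using ne by (simp only: inj_on_image_eq_iff[OF inj sub sub] not_False_eq_True)
    then show "g ` nbhd V1 E1 u \<noteq> g ` nbhd V1 E1 v" unfolding g_def by (simp add: image_image)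
  qed
  ultimately have "neighbor_locating_coloring V1 E1 (card ?S) g"
    by (simp add: neighbor_locating_coloring_def proper_coloring_def)
  then have "\<exists>g. neighbor_locating_coloring V1 E1 (card ?S) g" by blast
  then show ?thesis unfolding chi_L2_def by (rule Least_le)
qed

lemma restrict_right:
  assumes g1: "simple_graph V1 E1" and g2: "simple_graph V2 E2"
    and n: "neighbor_locating_coloring (join_vertices V1 V2) (join_edges V1 E1 V2 E2) k f"
  shows "chi_L2 V2 E2 \<le> card (f ` Inr ` V2)"
proof -
  let ?S = "f ` Inr ` V2"
  have fin: "finite ?S" using g2 by (simp add: simple_graph_def)
  obtain h where h: "bij_betw h ?S {1..card ?S}"
    using finite_same_card_bij[OF fin, of "{1..card ?S}"] by auto
  have inj: "inj_on h ?S" and onto: "h ` ?S = {1..card ?S}" using h by (auto simp: bij_betw_def)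
  define g where "g x = h (f (Inr x))" for x
  have pc: "\<forall>u\<in>join_vertices V1 V2. \<forall>v\<in>join_vertices V1 V2. join_edges V1 E1 V2 E2 u v \<longrightarrow> f u \<noteq> f v"
   and nl: "\<forall>u\<in>join_vertices V1 V2. \<forall>v\<in>join_vertices V1 V2. u \<noteq> v \<and> f u = f v \<longrightarrow>
      f ` nbhd (join_vertices V1 V2) (join_edges V1 E1 V2 E2) u \<noteq> f ` nbhd (join_vertices V1 V2) (join_edges V1 E1 V2 E2) v"
    using n by (auto simp: neighbor_locating_coloring_def proper_coloring_def)
  have "g ` V2 = {1..card ?S}" unfolding g_def using onto by (simp add: image_image)
  moreover have "\<forall>u\<in>V2. \<forall>v\<in>V2. E2 u v \<longrightarrow> g u \<noteq> g v"
  proof (intro ballI impI)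
    fix u v assume uv: "u \<in> V2" "v \<in> V2" "E2 u v"
    then have "f (Inr u) \<noteq> f (Inr v)" using pc by (auto simp: join_vertices_def)
    then show "g u \<noteq> g v" unfolding g_def using inj uv inj_on_def by (metis image_eqI)
  qed
  moreover have "\<forall>u\<in>V2. \<forall>v\<in>V2. u \<noteq> v \<and> g u = g v \<longrightarrow> g ` nbhd V2 E2 u \<noteq> g ` nbhd V2 E2 v"
  proof (intro ballI impI)
    fix u v assume uv: "u \<in> V2" "v \<in> V2" "u \<noteq> v \<and> g u = g v"
    then have "f (Inr u) = f (Inr v)" unfolding g_def using inj by (meson image_eqI inj_onD)
    have pre: "f ` (Inl ` V1 \<union> Inr ` nbhd V2 E2 u) \<noteq> f ` (Inl ` V1 \<union> Inr ` nbhd V2 E2 v)"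
    proof -
      have mem: "Inr u \<in> join_vertices V1 V2" "Inr v \<in> join_vertices V1 V2" using uv by (auto simp: join_vertices_def)
      have "Inr u \<noteq> Inr v" using uv by simp
      have "f ` nbhd (join_vertices V1 V2) (join_edges V1 E1 V2 E2) (Inr u) \<noteq> f ` nbhd (join_vertices V1 V2) (join_edges V1 E1 V2 E2) (Inr v)"
        by (rule nl[rule_format, OF mem(1) mem(2) conjI[OF \<open>Inr u \<noteq> Inr v\<close> \<open>f (Inr u) = f (Inr v)\<close>]])
      then show ?thesis using nbhd_Inr[OF g2, of u V1 E1] nbhd_Inr[OF g2, of v V1 E1] uv by simp
    qed
    have ne: "f ` Inr ` nbhd V2 E2 u \<noteq> f ` Inr ` nbhd V2 E2 v"
    proof
      assume eq: "f ` Inr ` nbhd V2 E2 u = f ` Inr ` nbhd V2 E2 v"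
      have "f ` (Inl ` V1 \<union> Inr ` nbhd V2 E2 u) = f ` (Inl ` V1 \<union> Inr ` nbhd V2 E2 v)" by (simp only: image_Un eq)
      with pre show False by contradiction
    qed
    have sub: "f ` Inr ` nbhd V2 E2 w \<subseteq> ?S" for w by (auto simp: nbhd_def)
    have "h ` f ` Inr ` nbhd V2 E2 u \<noteq> h ` f ` Inr ` nbhd V2 E2 v"
      using ne by (simp only: inj_on_image_eq_iff[OF inj sub sub] not_False_eq_True)
    then show "g ` nbhd V2 E2 u \<noteq> g ` nbhd V2 E2 v" unfolding g_def by (simp add: image_image)
  qed
  ultimately have "neighbor_locating_coloring V2 E2 (card ?S) g"
    by (simp add: neighbor_locating_coloring_def proper_coloring_def)
  then have "\<exists>g. neighbor_locating_coloring V2 E2 (card ?S) g" by blast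
  then show ?thesis unfolding chi_L2_def by (rule Least_le)
qed

lemma restrict_both:
  assumes g1: "simple_graph V1 E1" and g2: "simple_graph V2 E2"
    and n: "neighbor_locating_coloring (join_vertices V1 V2) (join_edges V1 E1 V2 E2) k f"
  shows "chi_L2 V1 E1 + chi_L2 V2 E2 \<le> k"
proof -
  have onto: "f ` join_vertices V1 V2 = {1..k}"
   and pc: "\<forall>u\<in>join_vertices V1 V2. \<forall>v\<in>join_vertices V1 V2. join_edges V1 E1 V2 E2 u v \<longrightarrow> f u \<noteq> f v"
    using n by (auto simp: neighbor_locating_coloring_def proper_coloring_def)
  have un: "f ` Inl ` V1 \<union> f ` Inr ` V2 = {1..k}" using onto by (simp add: join_vertices_def image_Un)
  have dj: "f ` Inl ` V1 \<inter> f ` Inr ` V2 = {}"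
  proof (rule ccontr)
    assume "f ` Inl ` V1 \<inter> f ` Inr ` V2 \<noteq> {}"
    then obtain x y where "x \<in> V1" "y \<in> V2" "f (Inl x) = f (Inr y)" by auto
    then show False using pc by (auto simp: join_vertices_def)
  qed
  have fin: "finite (f ` Inl ` V1)" "finite (f ` Inr ` V2)" using g1 g2 by (auto simp: simple_graph_def)
  have "card (f ` Inl ` V1) + card (f ` Inr ` V2) = k"
    using card_Un_disjoint[OF fin dj] un by simp
  then show ?thesis using restrict_left[OF g1 g2 n] restrict_right[OF g1 g2 n] by linarith
qed

lemma un_cancel: "A \<subseteq> L \<Longrightarrow> B \<subseteq> L \<Longrightarrow> C \<inter> L = {} \<Longrightarrow> A \<union> C = B \<union> C \<Longrightarrow> A = B"
  by blast

lemma combine: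
  assumes g1: "simple_graph V1 E1" and g2: "simple_graph V2 E2"
    and n1: "neighbor_locating_coloring V1 E1 a f1" and n2: "neighbor_locating_coloring V2 E2 b f2"
  shows "neighbor_locating_coloring (join_vertices V1 V2) (join_edges V1 E1 V2 E2) (a + b)
           (case_sum f1 (\<lambda>y. a + f2 y))"
proof -
  let ?f = "case_sum f1 (\<lambda>y. a + f2 y)"
  let ?J = "join_vertices V1 V2" and ?JE = "join_edges V1 E1 V2 E2"
  have o1: "f1 ` V1 = {1..a}" and p1: "\<forall>u\<in>V1. \<forall>v\<in>V1. E1 u v \<longrightarrow> f1 u \<noteq> f1 v"
    and l1: "\<forall>u\<in>V1. \<forall>v\<in>V1. u \<noteq> v \<and> f1 u = f1 v \<longrightarrow> f1 ` nbhd V1 E1 u \<noteq> f1 ` nbhd V1 E1 v"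
    using n1 by (auto simp: neighbor_locating_coloring_def proper_coloring_def)
  have o2: "f2 ` V2 = {1..b}" and p2: "\<forall>u\<in>V2. \<forall>v\<in>V2. E2 u v \<longrightarrow> f2 u \<noteq> f2 v"
    and l2: "\<forall>u\<in>V2. \<forall>v\<in>V2. u \<noteq> v \<and> f2 u = f2 v \<longrightarrow> f2 ` nbhd V2 E2 u \<noteq> f2 ` nbhd V2 E2 v"
    using n2 by (auto simp: neighbor_locating_coloring_def proper_coloring_def)
  have r1: "x \<in> V1 \<Longrightarrow> f1 x \<in> {1..a}" for x using o1 by blast
  have r2: "y \<in> V2 \<Longrightarrow> f2 y \<in> {1..b}" for y using o2 by blast
  have sh: "(\<lambda>y. a + f2 y) ` V2 = {a+1..a+b}"
  proof -
    have "(\<lambda>y. a + f2 y) ` V2 = plus a ` (f2 ` V2)" by (simp add: image_image)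
    also have "\<dots> = {a+1..a+b}" using o2 by (simp add: add.commute)
    finally show ?thesis .
  qed
  have "?f ` ?J = {1..a} \<union> {a+1..a+b}"
    unfolding join_vertices_def image_Un image_image o1[symmetric] sh[symmetric] by simp
  also have "\<dots> = {1..a+b}" by auto
  finally have onto: "?f ` ?J = {1..a+b}" .
  have prp: "\<forall>u\<in>?J. \<forall>v\<in>?J. ?JE u v \<longrightarrow> ?f u \<noteq> ?f v"
  proof (intro ballI impI)
    fix u v assume uv: "u \<in> ?J" "v \<in> ?J" "?JE u v"
    show "?f u \<noteq> ?f v"
    proof (cases u; cases v)
      fix x y assume "u = Inl x" "v = Inl y" then show ?thesis using uv p1 by (auto simp: join_vertices_def)
    next
      fix x y assume "u = Inl x" "v = Inr y" then show ?thesis using uv r1[of x] r2[of y] by (auto simp: join_vertices_def)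
    next
      fix x y assume "u = Inr x" "v = Inl y" then show ?thesis using uv r1[of y] r2[of x] by (auto simp: join_vertices_def)
    next
      fix x y assume "u = Inr x" "v = Inr y" then show ?thesis using uv p2 by (auto simp: join_vertices_def)
    qed
  qed
  have nl: "\<forall>u\<in>?J. \<forall>v\<in>?J. u \<noteq> v \<and> ?f u = ?f v \<longrightarrow> ?f ` nbhd ?J ?JE u \<noteq> ?f ` nbhd ?J ?JE v"
  proof (intro ballI impI)
    fix u v assume uJ: "u \<in> ?J" and vJ: "v \<in> ?J" and uv: "u \<noteq> v \<and> ?f u = ?f v"
    show "?f ` nbhd ?J ?JE u \<noteq> ?f ` nbhd ?J ?JE v"
    proof (cases u; cases v)
      fix x y assume ux: "u = Inl x" and vy: "v = Inl y"
      have x: "x \<in> V1" and y: "y \<in> V1" using uJ vJ ux vy by (auto simp: join_vertices_def)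
      have ne: "f1 ` nbhd V1 E1 x \<noteq> f1 ` nbhd V1 E1 y" using l1 x y uv ux vy by auto
      have nx: "?f ` nbhd ?J ?JE u = f1 ` nbhd V1 E1 x \<union> {a+1..a+b}"
        using nbhd_Inl[OF g1 x, of V2 E2] ux sh by (simp add: image_Un image_image)
      have ny: "?f ` nbhd ?J ?JE v = f1 ` nbhd V1 E1 y \<union> {a+1..a+b}"
        using nbhd_Inl[OF g1 y, of V2 E2] vy sh by (simp add: image_Un image_image)
      have s: "f1 ` nbhd V1 E1 w \<subseteq> {1..a}" for w using r1 by (auto simp: nbhd_def)
      have dj: "{a+1..a+b} \<inter> {1..a} = {}" by auto
      show ?thesis unfolding nx ny using un_cancel[OF s[of x] s[of y] dj] ne by blast
    next
      fix x y assume ux: "u = Inl x" and vy: "v = Inr y"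
      then show ?thesis using uv uJ vJ r1[of x] r2[of y] by (auto simp: join_vertices_def)
    next
      fix x y assume ux: "u = Inr x" and vy: "v = Inl y"
      then show ?thesis using uv uJ vJ r1[of y] r2[of x] by (auto simp: join_vertices_def)
    next
      fix x y assume ux: "u = Inr x" and vy: "v = Inr y"
      have x: "x \<in> V2" and y: "y \<in> V2" using uJ vJ ux vy by (auto simp: join_vertices_def)
      have ne: "f2 ` nbhd V2 E2 x \<noteq> f2 ` nbhd V2 E2 y" using l2 x y uv ux vy by auto
      have ne2: "plus a ` f2 ` nbhd V2 E2 x \<noteq> plus a ` f2 ` nbhd V2 E2 y"
        using ne inj_image_eq_iff[of "plus a"] by (simp add: inj_on_def)
      have nx: "?f ` nbhd ?J ?JE u = plus a ` f2 ` nbhd V2 E2 x \<union> {1..a}"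
        using nbhd_Inr[OF g2 x, of V1 E1] ux o1 by (auto simp: image_Un image_image)
      have ny: "?f ` nbhd ?J ?JE v = plus a ` f2 ` nbhd V2 E2 y \<union> {1..a}"
        using nbhd_Inr[OF g2 y, of V1 E1] vy o1 by (auto simp: image_Un image_image)
      have r2': "z \<in> V2 \<Longrightarrow> 0 < f2 z" for z using r2[of z] by simp
      have s: "plus a ` f2 ` nbhd V2 E2 w \<subseteq> {a<..}" for w by (auto simp: nbhd_def intro: r2')
      have dj: "{1..a} \<inter> {a<..} = {}" by auto
      show ?thesis unfolding nx ny using un_cancel[OF s[of x] s[of y] dj] ne2 by blast
    qed
  qed
  show ?thesis using onto prp nl by (simp add: neighbor_locating_coloring_def proper_coloring_def)
qed

theorem theorem1:
  fixes V1 :: "'a set" and E1 :: "'a \<Rightarrow> 'a \<Rightarrow> bool"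
    and V2 :: "'b set" and E2 :: "'b \<Rightarrow> 'b \<Rightarrow> bool"
  assumes "simple_graph V1 E1" and "simple_graph V2 E2"
  shows "chi_L (join_vertices V1 V2) (join_edges V1 E1 V2 E2) = chi_L2 V1 E1 + chi_L2 V2 E2"
proof -
  note g1 = assms(1) and g2 = assms(2)
  have d: "diam2 (join_vertices V1 V2) (join_edges V1 E1 V2 E2)" by (rule join_diam2[OF g1 g2])
  have e1: "neighbor_locating_coloring V1 E1 (chi_L2 V1 E1) (SOME f. neighbor_locating_coloring V1 E1 (chi_L2 V1 E1) f)"
    using nlc_exists[OF g1] unfolding chi_L2_def by (metis (mono_tags, lifting) LeastI_ex someI_ex)
  have e2: "neighbor_locating_coloring V2 E2 (chi_L2 V2 E2) (SOME f. neighbor_locating_coloring V2 E2 (chi_L2 V2 E2) f)"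
    using nlc_exists[OF g2] unfolding chi_L2_def by (metis (mono_tags, lifting) LeastI_ex someI_ex)
  show ?thesis
    unfolding chi_L_def loc_iff_nlc[OF d]
  proof (rule Least_equality)
    show "\<exists>f. neighbor_locating_coloring (join_vertices V1 V2) (join_edges V1 E1 V2 E2) (chi_L2 V1 E1 + chi_L2 V2 E2) f"
      using combine[OF g1 g2 e1 e2] by blast
    fix k assume "\<exists>f. neighbor_locating_coloring (join_vertices V1 V2) (join_edges V1 E1 V2 E2) k f"
    then show "chi_L2 V1 E1 + chi_L2 V2 E2 \<le> k" using restrict_both[OF g1 g2] by blast
  qed
qed

end
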